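(* Let $G$ be a graph with a perfect ordering $\{B_1,\dots,B_k\}$ of its prime components, with $S_i:=(B_1\cup\dots\cup B_{i-1})\cap B_i$. Let $\alpha>0$ and let $f=\psi_\alpha$ or $f=\phi_\alpha$. Suppose $f[-]$ preserves positivity on $\mathcal{P}_{G_{B_i}}(\mathbb{R})$ for every $i$, and $\alpha\ge|S_i|$ for all $i$. Then $f[-]$ preserves positivity on $\mathcal{P}_G(\mathbb{R})$.
   Context: Graphs are finite and simple; $G_U$ is the subgraph induced on $U$. A decomposition of $G=(V,E)$ is a partition $(A,C,B)$ of $V$ with $A,B$ nonempty such that every path from $A$ to $B$ meets $C$ and $G_C$ is complete; $G$ is prime if it admits no decomposition. Iteratively decomposing $G$ into $G_{A\cup C}$ and $G_{B\cup C}$ until no decomposition is possible yields the prime components of $G$. A sequence of vertex subsets $B_1,\dots,B_k$ with $S_j=(B_1\cup\dots\cup B_{j-1})\cap B_j$ is a perfect ordering if for every $1<i\le k$ there is $j<i$ with $S_i\subset B_j$, and each $S_i$ induces a complete graph. For a graph $H$ on $\{1,\dots,n\}$, $\mathcal{P}_H(\mathbb{R})$ is the set of real symmetric PSD $n\times n$ matrices $M$ with $m_{ij}=0$ for $i\ne j$ non-adjacent. $\psi_\alpha(x)=\mathrm{sgn}(x)|x|^\alpha$, $\phi_\alpha(x)=|x|^\alpha$ ($x\ne 0$), $\psi_\alpha(0)=\phi_\alpha(0)=0$, applied entrywise $f[M]=(f(m_{ij}))$; $f[-]$ preserves positivity on $\mathcal{P}_H(\mathbb{R})$ if $f[M]\in\mathcal{P}_H(\mathbb{R})$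 for all $M\in\mathcal{P}_H(\mathbb{R})$. *)

theory Defs
  imports "HOL-Analysis.Analysis"
begin

text \<open>Induced subgraphs G_U are represented by
  restricting attention to a vertex subset U.\<close>

definition simple_graph :: "nat set \<Rightarrow> (nat \<Rightarrow> nat \<Rightarrow> bool) \<Rightarrow> bool" where
  "simple_graph V E \<longleftrightarrow> finite V \<and> (\<forall>x\<in>V. \<forall>y\<in>V. E x y \<longrightarrow> E y x) \<and> (\<forall>x\<in>V. \<not> E x x)"

definition complete_on :: "(nat \<Rightarrow> nat \<Rightarrow> bool) \<Rightarrow> nat set \<Rightarrow> bool" where
  "complete_on E C \<longleftrightarrow> (\<forall>x\<in>C. \<forall>y\<in>C. x \<noteq> y \<longrightarrow> E x y)"

definition is_path :: "(nat \<Rightarrow> nat \<Rightarrow> bool) \<Rightarrow> nat set \<Rightarrow> nat list \<Rightarrow> bool" where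
  "is_path E U p \<longleftrightarrow> p \<noteq> [] \<and> distinct p \<and> set p \<subseteq> U \<and>
     (\<forall>i. Suc i < length p \<longrightarrow> E (p ! i) (p ! Suc i))"

definition decomposition :: "(nat \<Rightarrow> nat \<Rightarrow> bool) \<Rightarrow> nat set \<Rightarrow> nat set \<Rightarrow> nat set \<Rightarrow> nat set \<Rightarrow> bool" where
  "decomposition E U A C B \<longleftrightarrow>
     A \<union> C \<union> B = U \<and> A \<inter> C = {} \<and> A \<inter> B = {} \<and> C \<inter> B = {} \<and>
     A \<noteq> {} \<and> B \<noteq> {} \<and>
     (\<forall>p. is_path E U p \<and> hd p \<in> A \<and> last p \<in> B \<longrightarrow> set p \<inter> C \<noteq> {}) \<and>
     complete_on E C"

definition prime_graph :: "(nat \<Rightarrow> nat \<Rightarrow> bool) \<Rightarrow> nat set \<Rightarrow> bool" where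
  "prime_graph E U \<longleftrightarrow> \<not> (\<exists>A C B. decomposition E U A C B)"

inductive prime_comps :: "(nat \<Rightarrow> nat \<Rightarrow> bool) \<Rightarrow> nat set \<Rightarrow> nat set set \<Rightarrow> bool"
  for E where
  prime: "prime_graph E U \<Longrightarrow> prime_comps E U {U}"
| decomp: "decomposition E U A C B \<Longrightarrow> prime_comps E (A \<union> C) P1 \<Longrightarrow>
           prime_comps E (B \<union> C) P2 \<Longrightarrow> prime_comps E U (P1 \<union> P2)"

text \<open>Separators of a sequence B_1..B_k (list index i corresponds to B_(i+1)).\<close>
definition sep :: "nat set list \<Rightarrow> nat \<Rightarrow> nat set" where
  "sep Bs i = (\<Union>j<i. Bs ! j) \<inter> Bs ! i"

definition perfect_ordering :: "(nat \<Rightarrow> nat \<Rightarrow> bool) \<Rightarrow> nat set list \<Rightarrow> bool" where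
  "perfect_ordering E Bs \<longleftrightarrow>
     (\<forall>i. 0 < i \<and> i < length Bs \<longrightarrow> (\<exists>j<i. sep Bs i \<subseteq> Bs ! j)) \<and>
     (\<forall>i<length Bs. complete_on E (sep Bs i))"

text \<open>P_{G_U}(R): real symmetric positive semidefinite matrices indexed by U with
  zero entries at non-adjacent distinct pairs (entries outside U are irrelevant).\<close>
definition psd_on :: "nat set \<Rightarrow> (nat \<Rightarrow> nat \<Rightarrow> real) \<Rightarrow> bool" where
  "psd_on U M \<longleftrightarrow> (\<forall>i\<in>U. \<forall>j\<in>U. M i j = M j i) \<and>
     (\<forall>v::nat \<Rightarrow> real. (\<Sum>i\<in>U. \<Sum>j\<in>U. v i * M i j * v j) \<ge> 0)"

definition PG :: "(nat \<Rightarrow> nat \<Rightarrow> bool) \<Rightarrow> nat set \<Rightarrow> (nat \<Rightarrow> nat \<Rightarrow> real) set" where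
  "PG E U = {M. psd_on U M \<and> (\<forall>i\<in>U. \<forall>j\<in>U. i \<noteq> j \<and> \<not> E i j \<longrightarrow> M i j = 0)}"

definition entrywise :: "(real \<Rightarrow> real) \<Rightarrow> (nat \<Rightarrow> nat \<Rightarrow> real) \<Rightarrow> nat \<Rightarrow> nat \<Rightarrow> real" where
  "entrywise f M = (\<lambda>i j. f (M i j))"

definition preserves_positivity :: "(real \<Rightarrow> real) \<Rightarrow> (nat \<Rightarrow> nat \<Rightarrow> bool) \<Rightarrow> nat set \<Rightarrow> bool" where
  "preserves_positivity f E U \<longleftrightarrow> (\<forall>M\<in>PG E U. entrywise f M \<in> PG E U)"

definition psi :: "real \<Rightarrow> real \<Rightarrow> real" where
  "psi \<alpha> x = (if x = 0 then 0 else sgn x * \<bar>x\<bar> powr \<alpha>)"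

definition phi :: "real \<Rightarrow> real \<Rightarrow> real" where
  "phi \<alpha> x = (if x = 0 then 0 else \<bar>x\<bar> powr \<alpha>)"

end

theory Submission
  imports Defs
begin


definition qf :: "nat set \<Rightarrow> (nat \<Rightarrow> nat \<Rightarrow> real) \<Rightarrow> (nat \<Rightarrow> real) \<Rightarrow> real" where
  "qf U M v = (\<Sum>i\<in>U. \<Sum>j\<in>U. v i * M i j * v j)"

lemma psd_on_qf: "psd_on U M \<longleftrightarrow> (\<forall>i\<in>U. \<forall>j\<in>U. M i j = M j i) \<and> (\<forall>v. qf U M v \<ge> 0)"
  by (simp add: psd_on_def qf_def)

lemma qf_add: "qf U (\<lambda>i j. M i j + N i j) v = qf U M v + qf U N v"
  by (simp add: qf_def algebra_simps sum.distrib)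

lemma qf_diff: "qf U (\<lambda>i j. M i j - N i j) v = qf U M v - qf U N v"
  by (simp add: qf_def algebra_simps sum_subtractf)

lemma qf_scale: "qf U (\<lambda>i j. c * M i j) v = c * qf U M v"
  by (simp add: qf_def sum_distrib_left algebra_simps)

lemma qf_cong: "(\<And>i j. i \<in> U \<Longrightarrow> j \<in> U \<Longrightarrow> M i j = N i j) \<Longrightarrow> qf U M v = qf U N v"
  by (simp add: qf_def)

lemma qf_rank1: "qf U (\<lambda>i j. z i * z j) v = (\<Sum>i\<in>U. v i * z i)^2"
  unfolding qf_def power2_eq_square sum_product by (intro sum.cong refl) (simp add: ac_simps)

lemma qf_restrict:
  assumes "finite U" "X \<subseteq> U"
  shows "qf X M v = qf U M (\<lambda>i. if i \<in> X then v i else 0)"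
proof -
  have "qf U M (\<lambda>i. if i \<in> X then v i else 0) =
      (\<Sum>i\<in>X. \<Sum>j\<in>U. (if i \<in> X then v i else 0) * M i j * (if j \<in> X then v j else 0))"
    unfolding qf_def by (rule sum.mono_neutral_right) (use assms in auto)
  also have "\<dots> = (\<Sum>i\<in>X. \<Sum>j\<in>X. (if i \<in> X then v i else 0) * M i j * (if j \<in> X then v j else 0))"
    by (rule sum.cong[OF refl], rule sum.mono_neutral_right) (use assms in auto)
  also have "\<dots> = qf X M v" unfolding qf_def by simp
  finally show ?thesis by simp
qed

lemma qf_ext:
  assumes "finite U" "X \<subseteq> U"
  shows "qf U (\<lambda>i j. if i \<in> X \<and> j \<in> X then N i j else 0) v = qf X N v"
proof -
  have "qf U (\<lambda>i j. if i \<in> X \<and> j \<in> X then N i j else 0) v =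
      (\<Sum>i\<in>X. \<Sum>j\<in>U. v i * (if i \<in> X \<and> j \<in> X then N i j else 0) * v j)"
    unfolding qf_def by (rule sum.mono_neutral_right) (use assms in auto)
  also have "\<dots> = (\<Sum>i\<in>X. \<Sum>j\<in>X. v i * (if i \<in> X \<and> j \<in> X then N i j else 0) * v j)"
    by (rule sum.cong[OF refl], rule sum.mono_neutral_right) (use assms in auto)
  also have "\<dots> = qf X N v" unfolding qf_def by (rule sum.cong[OF refl], rule sum.cong) auto
  finally show ?thesis by simp
qed

lemma psd_subset: "finite U \<Longrightarrow> X \<subseteq> U \<Longrightarrow> psd_on U M \<Longrightarrow> psd_on X M"
  unfolding psd_on_qf
proof (intro conjI allI ballI)
  fix i j assume "finite U" "X \<subseteq> U" "(\<forall>i\<in>U. \<forall>j\<in>U. M i j = M j i) \<and> (\<forall>v. 0 \<le> qf U M v)" "i \<in> X" "j \<in> X"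
  thus "M i j = M j i" by blast
next
  fix v assume a: "finite U" "X \<subseteq> U" "(\<forall>i\<in>U. \<forall>j\<in>U. M i j = M j i) \<and> (\<forall>v. 0 \<le> qf U M v)"
  have "qf X M v = qf U M (\<lambda>i. if i \<in> X then v i else 0)" by (rule qf_restrict) (use a in auto)
  thus "0 \<le> qf X M v" using a by simp
qed

lemma qf_remove:
  assumes "finite U" "k \<in> U" "\<And>j. j \<in> U \<Longrightarrow> D k j = 0" "\<And>j. j \<in> U \<Longrightarrow> D j k = 0"
  shows "qf U D v = qf (U - {k}) D v"
proof -
  have "qf U D v = qf U (\<lambda>i j. if i \<in> U - {k} \<and> j \<in> U - {k} then D i j else 0) v"
    by (rule qf_cong) (use assms in auto)
  also have "\<dots> = qf (U - {k}) D v" by (rule qf_ext) (use assms in auto)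
  finally show ?thesis .
qed

lemma psd_add: "psd_on U M \<Longrightarrow> psd_on U N \<Longrightarrow> psd_on U (\<lambda>i j. M i j + N i j)"
  unfolding psd_on_qf qf_add by auto

lemma psd_scale: "psd_on U M \<Longrightarrow> 0 \<le> c \<Longrightarrow> psd_on U (\<lambda>i j. c * M i j)"
  unfolding psd_on_qf qf_scale by auto

lemma psd_rank1: "psd_on U (\<lambda>i j. z i * z j)"
  unfolding psd_on_qf qf_rank1 by auto

lemma qf_delta:
  assumes "finite U" "k \<in> U"
  shows "qf U M (\<lambda>i. if i = k then 1 else 0) = M k k"
proof -
  have e: "(\<lambda>i. if i \<in> {k} then (if i = k then 1 else 0) else 0) = (\<lambda>i. if i = k then (1::real) else 0)"
    by (rule ext) auto
  have "qf U M (\<lambda>i. if i = k then 1 else 0) = qf {k} M (\<lambda>i. if i = k then 1 else 0)"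
    using qf_restrict[of U "{k}" M "\<lambda>i. if i = k then 1 else 0"] assms by (simp only: e) simp
  also have "\<dots> = M k k" by (simp add: qf_def)
  finally show ?thesis .
qed

lemma qf_two:
  assumes "finite U" "p \<in> U" "q \<in> U" "p \<noteq> q"
  shows "qf U M (\<lambda>i. if i = p then s else if i = q then r else 0) =
     s * s * M p p + s * r * M p q + r * s * M q p + r * r * M q q"
proof -
  define F where "F = (\<lambda>i. if i = p then s else if i = q then r else 0)"
  have e: "(\<lambda>i. if i \<in> {p,q} then F i else 0) = F" by (rule ext) (simp add: F_def)
  have "qf U M F = qf {p,q} M F"
    using qf_restrict[of U "{p,q}" M F] assms by (simp only: e) simp
  also have "\<dots> = s * s * M p p + s * r * M p q + r * s * M q p + r * r * M q q"
    using assms(4) by (simp add: qf_def F_def algebra_simps)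
  finally show ?thesis unfolding F_def .
qed

lemma psd_diag: "finite U \<Longrightarrow> psd_on U M \<Longrightarrow> k \<in> U \<Longrightarrow> M k k \<ge> 0"
  using qf_delta[of U k M] unfolding psd_on_qf by metis

lemma psd_zero_diag:
  assumes "finite U" "psd_on U M" "k \<in> U" "j \<in> U" "M k k = 0"
  shows "M k j = 0"
proof (cases "j = k")
  case True thus ?thesis using assms by simp
next
  case False
  have sym: "M j k = M k j" using assms unfolding psd_on_qf by auto
  have q: "\<And>t. 0 \<le> 2 * t * M k j + M j j"
  proof -
    fix t
    have "0 \<le> qf U M (\<lambda>i. if i = k then t else if i = j then 1 else 0)"
      using assms unfolding psd_on_qf by auto
    also have "\<dots> = t*t*M k k + t*1*M k j + 1*t*M j k + 1*1*M j j"
      by (rule qf_two) (use assms False in auto)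
    finally show "0 \<le> 2 * t * M k j + M j j" using assms sym by simp
  qed
  show ?thesis
  proof (rule ccontr)
    assume "M k j \<noteq> 0"
    have "0 \<le> 2 * (-(M j j + 1) / (2 * M k j)) * M k j + M j j" by (rule q)
    also have "\<dots> = -1" using \<open>M k j \<noteq> 0\<close> by (simp add: field_simps)
    finally show False by simp
  qed
qed

lemma qf_plus_vec:
  "qf U M (\<lambda>i. v i + w i) = qf U M v + qf U M w + (\<Sum>i\<in>U. \<Sum>j\<in>U. v i * M i j * w j + w i * M i j * v j)"
  by (simp add: qf_def algebra_simps sum.distrib)

lemma pivot:
  assumes U: "finite U" "k \<in> U" and A: "psd_on U A"
  shows "\<exists>z. psd_on U (\<lambda>i j. A i j - z i * z j) \<and> (\<forall>j\<in>U. A k j - z k * z j = 0)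
             \<and> (\<forall>j\<in>U. A j k = 0 \<longrightarrow> z j = 0)"
proof -
  have sym: "\<And>i j. i \<in> U \<Longrightarrow> j \<in> U \<Longrightarrow> A i j = A j i" using A unfolding psd_on_qf by auto
  define a where "a = A k k"
  have a0: "a \<ge> 0" using psd_diag[OF U(1) A U(2)] a_def by simp
  show ?thesis
  proof (cases "a = 0")
    case True
    have z: "\<And>j. j \<in> U \<Longrightarrow> A k j = 0" using psd_zero_diag[OF U(1) A U(2)] True a_def by auto
    show ?thesis by (rule exI[of _ "\<lambda>_. 0"]) (use A z in simp)
  next
    case False
    hence apos: "a > 0" using a0 by simp
    define z where "z j = A j k / sqrt a" for j
    have zk: "z k = sqrt a" using apos unfolding z_def a_def
      by (metis a_def real_div_sqrt less_eq_real_def)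
    have sa: "sqrt a \<noteq> 0" using apos by simp
    have row: "\<forall>j\<in>U. A k j - z k * z j = 0"
    proof
      fix j assume j: "j \<in> U"
      have zj: "z j = A j k / sqrt a" by (simp add: z_def)
      have "z k * z j = sqrt a * (A j k / sqrt a)" by (simp only: zk zj)
      also have "\<dots> = A j k" using sa by simp
      finally have "z k * z j = A j k" .
      thus "A k j - z k * z j = 0" using sym[OF j U(2)] by simp
    qed
    have psd: "psd_on U (\<lambda>i j. A i j - z i * z j)"
      unfolding psd_on_qf
    proof (intro conjI allI ballI)
      fix i j assume "i \<in> U" "j \<in> U" thus "A i j - z i * z j = A j i - z j * z i" using sym by simp
    next
      fix v
      define s where "s = (\<Sum>i\<in>U. v i * A i k)"
      define t where "t = - s / a"
      define w where "w i = (if i = k then t else 0)" for i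
      have c1: "(\<Sum>i\<in>U. \<Sum>j\<in>U. v i * A i j * w j) = t * s"
      proof -
        have "(\<Sum>i\<in>U. \<Sum>j\<in>U. v i * A i j * w j) = (\<Sum>i\<in>U. \<Sum>j\<in>U. if j = k then v i * A i k * t else 0)"
          by (intro sum.cong refl) (simp add: w_def)
        also have "\<dots> = (\<Sum>i\<in>U. v i * A i k * t)" using U by simp
        also have "\<dots> = t * s" by (simp add: s_def sum_distrib_left ac_simps)
        finally show ?thesis .
      qed
      have c2: "(\<Sum>i\<in>U. \<Sum>j\<in>U. w i * A i j * v j) = t * s"
      proof -
        have "(\<Sum>i\<in>U. \<Sum>j\<in>U. w i * A i j * v j) = (\<Sum>i\<in>U. if i = k then (\<Sum>j\<in>U. t * A k j * v j) else 0)"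
          by (intro sum.cong refl) (simp add: w_def)
        also have "\<dots> = (\<Sum>j\<in>U. t * A k j * v j)" using U by simp
        also have "\<dots> = (\<Sum>j\<in>U. t * (v j * A j k))" by (intro sum.cong refl) (simp add: sym[OF U(2)])
        also have "\<dots> = t * s" by (simp add: s_def sum_distrib_left)
        finally show ?thesis .
      qed
      have cross: "(\<Sum>i\<in>U. \<Sum>j\<in>U. v i * A i j * w j + w i * A i j * v j) = 2 * t * s"
        using c1 c2 by (simp add: sum.distrib)
      have ww: "qf U A w = t * t * a"
      proof -
        have "qf U A w = (\<Sum>i\<in>U. \<Sum>j\<in>U. if i = k then (if j = k then t * A k k * t else 0) else 0)"
          unfolding qf_def by (intro sum.cong refl) (simp add: w_def)
        also have "\<dots> = (\<Sum>i\<in>U. if i = k then t * A k k * t else 0)"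
          by (intro sum.cong refl) (use U in auto)
        also have "\<dots> = t * t * a" using U by (simp add: a_def)
        finally show ?thesis .
      qed
      have "0 \<le> qf U A (\<lambda>i. v i + w i)" using A unfolding psd_on_qf by auto
      also have "\<dots> = qf U A v - s^2 / a"
        unfolding qf_plus_vec cross ww t_def using apos by (simp add: field_simps power2_eq_square)
      also have "s^2/a = qf U (\<lambda>i j. z i * z j) v"
        unfolding qf_rank1 z_def s_def using apos
        by (simp add: power_divide sum_divide_distrib[symmetric] algebra_simps)
      finally show "0 \<le> qf U (\<lambda>i j. A i j - z i * z j) v" by (simp add: qf_diff)
    qed
    show ?thesis using psd row by (intro exI[of _ z]) (auto simp: z_def)
  qed
qed


lemma psd_empty: "psd_on {} M" by (simp add: psd_on_def)

lemma schur:
  assumes "finite U" "psd_on U A" "psd_on U B"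
  shows "psd_on U (\<lambda>i j. A i j * B i j)"
  using assms
proof (induction U arbitrary: B rule: finite_induct)
  case empty thus ?case by (simp add: psd_empty)
next
  case (insert k F)
  let ?U = "insert k F"
  obtain z where z1: "psd_on ?U (\<lambda>i j. B i j - z i * z j)"
      and z2: "\<forall>j\<in>?U. B k j - z k * z j = 0"
    using pivot[of ?U k B] insert by auto
  define B2 where "B2 = (\<lambda>i j. B i j - z i * z j)"
  have B2psd: "psd_on ?U B2" using z1 B2_def by simp
  have symA: "\<forall>i\<in>?U. \<forall>j\<in>?U. A i j = A j i" using insert.prems unfolding psd_on_qf by blast
  have symB: "\<forall>i\<in>?U. \<forall>j\<in>?U. B i j = B j i" using insert.prems unfolding psd_on_qf by blast
  have symB2: "\<forall>i\<in>?U. \<forall>j\<in>?U. B2 i j = B2 j i" using B2psd unfolding psd_on_qf by blast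
  have fU: "finite ?U" using insert.hyps by simp
  have AF: "psd_on F A" by (rule psd_subset[OF fU _ insert.prems(1)]) blast
  have BF: "psd_on F B2" by (rule psd_subset[OF fU _ B2psd]) blast
  have IH: "psd_on F (\<lambda>i j. A i j * B2 i j)" using insert.IH[OF AF BF] .
  show ?case unfolding psd_on_qf
  proof (intro conjI allI ballI)
    fix i j assume ij: "i \<in> ?U" "j \<in> ?U"
    have "A i j = A j i" "B i j = B j i" using symA symB ij by blast+
    thus "A i j * B i j = A j i * B j i" by simp
  next
    fix v
    have "qf ?U (\<lambda>i j. A i j * B i j) v = qf ?U (\<lambda>i j. A i j * (z i * z j) + A i j * B2 i j) v"
      by (rule qf_cong) (simp add: B2_def algebra_simps)
    also have "\<dots> = qf ?U (\<lambda>i j. A i j * (z i * z j)) v + qf ?U (\<lambda>i j. A i j * B2 i j) v"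
      by (rule qf_add)
    also have "qf ?U (\<lambda>i j. A i j * (z i * z j)) v = qf ?U A (\<lambda>i. v i * z i)"
      unfolding qf_def by (intro sum.cong refl) (simp add: ac_simps)
    also have "qf ?U (\<lambda>i j. A i j * B2 i j) v = qf (?U - {k}) (\<lambda>i j. A i j * B2 i j) v"
    proof (rule qf_remove)
      show "finite ?U" using insert by simp
      show "k \<in> ?U" by simp
      fix j assume "j \<in> ?U"
      have b0: "B2 k j = 0" using z2 \<open>j \<in> ?U\<close> unfolding B2_def by blast
      thus "A k j * B2 k j = 0" by simp
      have "B2 j k = B2 k j" using symB2 \<open>j \<in> ?U\<close> by blast
      thus "A j k * B2 j k = 0" using b0 by simp
    qed
    also have "?U - {k} = F" using insert.hyps by auto
    finally have eq: "qf ?U (\<lambda>i j. A i j * B i j) v = qf ?U A (\<lambda>i. v i * z i) + qf F (\<lambda>i j. A i j * B2 i j) v" .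
    have "0 \<le> qf ?U A (\<lambda>i. v i * z i)" using insert.prems(1) unfolding psd_on_qf by blast
    moreover have "0 \<le> qf F (\<lambda>i j. A i j * B2 i j) v" using IH unfolding psd_on_qf by blast
    ultimately show "0 \<le> qf ?U (\<lambda>i j. A i j * B i j) v" unfolding eq by simp
  qed
qed

lemma split_elim:
  assumes "finite U" "psd_on U M" "K \<subseteq> U" "Y \<subseteq> U" "K \<inter> Y = {}" "\<forall>i\<in>K. \<forall>j\<in>Y. M i j = 0"
  shows "\<exists>M1. psd_on U M1 \<and> psd_on U (\<lambda>i j. M i j - M1 i j) \<and> (\<forall>i\<in>K. \<forall>j\<in>U. M i j - M1 i j = 0)
           \<and> (\<forall>i\<in>Y. \<forall>j\<in>U. M1 i j = 0)"
proof -
  have "finite K" using assms finite_subset by blast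
  thus ?thesis using assms(3,5,6)
  proof (induction K rule: finite_induct)
    case empty
    show ?case by (rule exI[of _ "\<lambda>_ _. 0"]) (use assms in \<open>simp add: psd_on_def\<close>)
  next
    case (insert k K)
    obtain M1 where h1: "psd_on U M1" and h2: "psd_on U (\<lambda>i j. M i j - M1 i j)"
      and h3: "\<forall>i\<in>K. \<forall>j\<in>U. M i j - M1 i j = 0" and h4: "\<forall>i\<in>Y. \<forall>j\<in>U. M1 i j = 0"
      using insert by auto
    have kU: "k \<in> U" using insert by auto
    obtain z where z1: "psd_on U (\<lambda>i j. (M i j - M1 i j) - z i * z j)"
        and z2: "\<forall>j\<in>U. (M k j - M1 k j) - z k * z j = 0"
        and z3: "\<forall>j\<in>U. (M j k - M1 j k) = 0 \<longrightarrow> z j = 0"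
      using pivot[OF assms(1) kU h2] by blast
    have symM: "\<forall>i\<in>U. \<forall>j\<in>U. M i j = M j i" using assms(2) unfolding psd_on_qf by blast
    show ?case
    proof (intro exI[of _ "\<lambda>i j. M1 i j + z i * z j"] conjI ballI)
      show "psd_on U (\<lambda>i j. M1 i j + z i * z j)" by (rule psd_add[OF h1 psd_rank1])
      have "(\<lambda>i j. M i j - (M1 i j + z i * z j)) = (\<lambda>i j. (M i j - M1 i j) - z i * z j)"
        by (auto simp: algebra_simps)
      thus "psd_on U (\<lambda>i j. M i j - (M1 i j + z i * z j))" using z1 by simp
    next
      fix i j assume i: "i \<in> insert k K" and j: "j \<in> U"
      show "M i j - (M1 i j + z i * z j) = 0"
      proof (cases "i = k")
        case True thus ?thesis using z2 j by (simp add: algebra_simps)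
      next
        case False
        hence iK: "i \<in> K" using i by simp
        hence "z i = 0" using z3 h3 kU insert.prems by auto
        thus ?thesis using h3 iK j by simp
      qed
    next
      fix i j assume i: "i \<in> Y" and j: "j \<in> U"
      have iU: "i \<in> U" using i assms(4) by auto
      have "M k i = 0" using insert.prems i by auto
      hence "M i k = 0" using symM kU iU by metis
      hence "z i = 0" using z3 h4 i iU kU by auto
      thus "M1 i j + z i * z j = 0" using h4 i j by simp
    qed
  qed
qed



definition gp :: "bool \<Rightarrow> real \<Rightarrow> real \<Rightarrow> real" where
  "gp b \<beta> x = (if b then sgn x else 1) * \<bar>x\<bar> powr \<beta>"

lemma gp_0[simp]: "gp b \<beta> 0 = 0" by (simp add: gp_def)

lemma gp_nonneg: "x \<ge> 0 \<Longrightarrow> gp b \<beta> x = x powr \<beta>"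
  by (cases "x = 0") (auto simp: gp_def)

lemma gp_mult: "gp b \<beta> (x * y) = gp b \<beta> x * gp b \<beta> y"
  by (simp add: gp_def abs_mult powr_mult sgn_mult)

lemma gp_abs: "\<bar>gp b \<beta> x\<bar> = \<bar>x\<bar> powr \<beta>"
  by (cases "x = 0") (auto simp: gp_def abs_mult abs_sgn_eq)

lemma psi_gp: "psi \<alpha> = gp True \<alpha>"
  by (rule ext) (simp add: psi_def gp_def)

lemma phi_gp: "phi \<alpha> = gp False \<alpha>"
  by (rule ext) (simp add: phi_def gp_def)

lemma gp_deriv:
  assumes "x \<noteq> 0"
  shows "(gp b \<beta> has_real_derivative (\<beta> * gp (\<not> b) (\<beta> - 1) x)) (at x)"
proof (cases "x > 0")
  case True
  have d: "((\<lambda>t. t powr \<beta>) has_real_derivative \<beta> * x powr (\<beta> - 1)) (at x)"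
    by (rule has_real_derivative_powr) (use True in simp)
  show ?thesis
  proof (rule has_field_derivative_transform_within_open[OF _ open_greaterThan[of 0]])
    show "((\<lambda>t. t powr \<beta>) has_real_derivative \<beta> * gp (\<not> b) (\<beta> - 1) x) (at x)"
      using d True by (simp add: gp_nonneg)
    show "x \<in> {0<..}" using True by simp
    show "\<And>t. t \<in> {0<..} \<Longrightarrow> t powr \<beta> = gp b \<beta> t" by (simp add: gp_nonneg)
  qed
next
  case False
  hence neg: "x < 0" using assms by simp
  define c :: real where "c = (if b then -1 else 1)"
  have d0: "((\<lambda>t. (- t) powr \<beta>) has_real_derivative \<beta> * (- x) powr (\<beta> - of_nat 1) * (-1)) (at x)"
    by (rule DERIV_fun_powr) (use neg in \<open>auto intro!: derivative_eq_intros\<close>)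
  have d: "((\<lambda>t. c * (- t) powr \<beta>) has_real_derivative c * (\<beta> * (- x) powr (\<beta> - of_nat 1) * (-1))) (at x)"
    by (rule DERIV_cmult[OF d0])
  show ?thesis
  proof (rule has_field_derivative_transform_within_open[OF _ open_lessThan[of 0]])
    show "((\<lambda>t. c * (- t) powr \<beta>) has_real_derivative \<beta> * gp (\<not> b) (\<beta> - 1) x) (at x)"
    proof -
      have e: "\<beta> * gp (\<not> b) (\<beta> - 1) x = c * (\<beta> * (- x) powr (\<beta> - of_nat 1) * (-1))"
        using neg by (simp add: gp_def c_def)
      show ?thesis by (subst e) (rule d)
    qed
    show "x \<in> {..<0}" using neg by simp
    show "\<And>t. t \<in> {..<0} \<Longrightarrow> c * (- t) powr \<beta> = gp b \<beta> t" by (simp add: gp_def c_def)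
  qed
qed

lemma gp_isCont:
  assumes "\<beta> > 0"
  shows "isCont (gp b \<beta>) x"
proof (cases "x = 0")
  case False thus ?thesis using gp_deriv DERIV_isCont by blast
next
  case True
  have "((\<lambda>t. \<bar>t\<bar> powr \<beta>) \<longlongrightarrow> 0 powr \<beta>) (at 0)"
    by (rule tendsto_powr') (use assms in \<open>auto intro!: tendsto_eq_intros\<close>)
  hence "((\<lambda>t. \<bar>gp b \<beta> t\<bar>) \<longlongrightarrow> 0) (at 0)" by (simp add: gp_abs)
  hence "(gp b \<beta> \<longlongrightarrow> 0) (at 0)" by (simp add: tendsto_rabs_zero_iff)
  thus ?thesis using True by (simp add: isCont_def)
qed

lemma gp_integral:
  assumes "\<beta> \<ge> 1"
  shows "((\<lambda>l. (x - y) * (\<beta> * gp (\<not> b) (\<beta> - 1) (y + l * (x - y)))) has_integral (gp b \<beta> x - gp b \<beta> y)) {0..1}"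
proof (cases "x = y")
  case True
  thus ?thesis using has_integral_0[of "{0..1::real}"] by simp
next
  case False
  define f where "f l = gp b \<beta> (y + l * (x - y))" for l
  have "((\<lambda>l. (x - y) * (\<beta> * gp (\<not> b) (\<beta> - 1) (y + l * (x - y)))) has_integral (f 1 - f 0)) {0..1}"
  proof (rule fundamental_theorem_of_calculus_interior_strong[of "{- y / (x - y)}"])
    show "finite {- y / (x - y)}" by simp
    show "(0::real) \<le> 1" by simp
    fix l assume l: "l \<in> {0<..<1} - {- y / (x - y)}"
    have nz: "y + l * (x - y) \<noteq> 0"
    proof
      assume "y + l * (x - y) = 0"
      hence "l = - y / (x - y)" using False by (simp add: field_simps)
      thus False using l by simp
    qed
    have dl: "((\<lambda>l. y + l * (x - y)) has_real_derivative (x - y)) (at l)"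
      by (auto intro!: derivative_eq_intros)
    have "(f has_real_derivative (\<beta> * gp (\<not> b) (\<beta> - 1) (y + l * (x - y))) * (x - y)) (at l)"
      unfolding f_def by (rule DERIV_chain2[OF gp_deriv[OF nz] dl])
    thus "(f has_vector_derivative (x - y) * (\<beta> * gp (\<not> b) (\<beta> - 1) (y + l * (x - y)))) (at l)"
      by (simp add: has_real_derivative_iff_has_vector_derivative[symmetric] mult.commute)
  next
    have "\<forall>l\<in>{0..1}. isCont f l"
    proof
      fix l :: real
      have c1: "isCont (\<lambda>l. y + l * (x - y)) l" by (intro continuous_intros)
      have c2: "isCont (gp b \<beta>) (y + l * (x - y))" by (rule gp_isCont) (use assms in simp)
      show "isCont f l" unfolding f_def by (rule isCont_o2[OF c1 c2])
    qed
    thus "continuous_on {0..1} f" by (rule continuous_at_imp_continuous_on)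
  qed
  thus ?thesis by (simp add: f_def)
qed



lemma qf_integral:
  assumes "finite X" "\<And>i j. i \<in> X \<Longrightarrow> j \<in> X \<Longrightarrow> (F i j has_integral I i j) {0..1::real}"
    and "\<And>l. l \<in> {0..1} \<Longrightarrow> 0 \<le> (\<Sum>i\<in>X. \<Sum>j\<in>X. v i * F i j l * v j)"
  shows "0 \<le> qf X I v"
proof -
  have "((\<lambda>l. \<Sum>i\<in>X. \<Sum>j\<in>X. v i * F i j l * v j) has_integral qf X I v) {0..1}"
    unfolding qf_def
  proof (rule has_integral_sum[OF assms(1)])
    fix i assume i: "i \<in> X"
    show "((\<lambda>l. \<Sum>j\<in>X. v i * F i j l * v j) has_integral (\<Sum>j\<in>X. v i * I i j * v j)) {0..1}"
    proof (rule has_integral_sum[OF assms(1)])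
      fix j assume j: "j \<in> X"
      show "((\<lambda>l. v i * F i j l * v j) has_integral (v i * I i j * v j)) {0..1}"
        by (intro has_integral_mult_left has_integral_mult_right assms(2) i j)
    qed
  qed
  thus ?thesis by (rule has_integral_nonneg) (use assms(3) in auto)
qed

lemma sum_qf_scale:
  assumes "\<And>i j. i \<in> X \<Longrightarrow> j \<in> X \<Longrightarrow> F i j = c * G i j"
  shows "(\<Sum>i\<in>X. \<Sum>j\<in>X. v i * F i j * v j) = c * qf X G v"
  unfolding qf_def sum_distrib_left
  by (intro sum.cong refl) (simp add: assms algebra_simps)

lemma quad_nonneg:
  fixes a c d x y :: real
  assumes "0 \<le> a" "0 \<le> d" "c * c \<le> a * d"
  shows "0 \<le> x * a * x + x * c * y + y * c * x + y * d * y"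
proof (cases "a = 0")
  case True
  hence "c * c \<le> 0" using assms by simp
  hence "c = 0" by (metis mult_eq_0_iff not_square_less_zero order_antisym_conv zero_le_square)
  have "0 \<le> d * (y * y)" by (rule mult_nonneg_nonneg[OF assms(2)]) simp
  thus ?thesis using True \<open>c = 0\<close> by (simp add: algebra_simps)
next
  case False
  hence ap: "a > 0" using assms by simp
  have "a * (x * a * x + x * c * y + y * c * x + y * d * y) = (a * x + c * y)^2 + (a * d - c * c) * y^2"
    by (simp add: power2_eq_square algebra_simps)
  also have "\<dots> \<ge> 0"
  proof -
    have "0 \<le> (a * d - c * c) * y^2" by (rule mult_nonneg_nonneg) (use assms in auto)
    moreover have "0 \<le> (a * x + c * y)^2" by simp
    ultimately show ?thesis by linarith
  qed
  finally show ?thesis using ap by (simp add: zero_le_mult_iff)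
qed

lemma psd2:
  assumes "psd_on {p,q} A" "p \<noteq> q"
  shows "A p q * A p q \<le> A p p * A q q"
proof -
  have f: "finite {p,q}" by simp
  have sym: "A q p = A p q" using assms(1) unfolding psd_on_def by blast
  have a0: "A p p \<ge> 0" by (rule psd_diag[OF f assms(1)]) simp
  have d0: "A q q \<ge> 0" by (rule psd_diag[OF f assms(1)]) simp
  show ?thesis
  proof (cases "A p p = 0")
    case True
    have "A p q = 0" by (rule psd_zero_diag[OF f assms(1)]) (use True in auto)
    thus ?thesis using a0 d0 by simp
  next
    case False
    have "0 \<le> qf {p,q} A (\<lambda>i. if i = p then A p q else if i = q then - A p p else 0)"
      using assms(1) unfolding psd_on_qf by blast
    also have "\<dots> = A p q * A p q * A p p + A p q * (- A p p) * A p q + (- A p p) * A p q * A q p + (- A p p) * (- A p p) * A q q"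
      by (rule qf_two) (use assms(2) in auto)
    also have "\<dots> = A p p * (A p p * A q q - A p q * A p q)" by (simp only: sym) algebra
    finally have "0 \<le> A p p * (A p p * A q q - A p q * A p q)" .
    thus ?thesis using False a0 by (simp add: zero_le_mult_iff)
  qed
qed

lemma gp_sq_bound:
  assumes "0 \<le> \<beta>" "0 \<le> a" "0 \<le> d" "c * c \<le> a * d"
  shows "gp b \<beta> c * gp b \<beta> c \<le> gp b \<beta> a * gp b \<beta> d"
proof -
  have "gp b \<beta> c * gp b \<beta> c = \<bar>gp b \<beta> c\<bar> * \<bar>gp b \<beta> c\<bar>" by (simp add: abs_mult_self_eq)
  also have "\<dots> = (\<bar>c\<bar> * \<bar>c\<bar>) powr \<beta>" by (subst powr_mult) (simp_all add: gp_abs)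
  also have "\<dots> = (c * c) powr \<beta>" by (simp add: abs_mult_self_eq)
  also have "\<dots> \<le> (a * d) powr \<beta>" by (rule powr_mono2) (use assms in auto)
  also have "\<dots> = gp b \<beta> a * gp b \<beta> d" using assms by (simp add: gp_nonneg powr_mult)
  finally show ?thesis .
qed

lemma pos_small:
  assumes "finite U" "card U \<le> 2" "psd_on U A" "0 \<le> \<beta>"
  shows "psd_on U (\<lambda>i j. gp b \<beta> (A i j))"
  unfolding psd_on_qf
proof (intro conjI allI ballI)
  fix i j assume "i \<in> U" "j \<in> U" thus "gp b \<beta> (A i j) = gp b \<beta> (A j i)"
    using assms(3) unfolding psd_on_qf by metis
next
  fix v
  have "card U = 0 \<or> card U = 1 \<or> card U = 2" using assms(2) by linarith
  then show "0 \<le> qf U (\<lambda>i j. gp b \<beta> (A i j)) v"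
  proof (elim disjE)
    assume "card U = 0" hence "U = {}" using assms(1) by simp
    thus ?thesis by (simp add: qf_def)
  next
    assume "card U = 1"
    then obtain p where U: "U = {p}" by (meson card_1_singletonE)
    have "A p p \<ge> 0" by (rule psd_diag[OF assms(1,3)]) (simp add: U)
    hence "gp b \<beta> (A p p) \<ge> 0" by (simp add: gp_nonneg)
    hence "0 \<le> gp b \<beta> (A p p) * (v p * v p)" by (rule mult_nonneg_nonneg) simp
    thus ?thesis by (simp add: U qf_def algebra_simps)
  next
    assume "card U = 2"
    then obtain p q where U: "U = {p,q}" and pq: "p \<noteq> q" by (meson card_2_iff)
    have psd: "psd_on {p,q} A" using assms(3) U by simp
    have sym: "A q p = A p q" using psd unfolding psd_on_def by blast
    have f: "finite {p,q}" by simp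
    have a0: "A p p \<ge> 0" by (rule psd_diag[OF f psd]) simp
    have d0: "A q q \<ge> 0" by (rule psd_diag[OF f psd]) simp
    have cb: "A p q * A p q \<le> A p p * A q q" by (rule psd2[OF psd pq])
    have g: "gp b \<beta> (A p q) * gp b \<beta> (A p q) \<le> gp b \<beta> (A p p) * gp b \<beta> (A q q)"
      by (rule gp_sq_bound) (use assms(4) a0 d0 cb in auto)
    have ga: "0 \<le> gp b \<beta> (A p p)" "0 \<le> gp b \<beta> (A q q)" using a0 d0 by (simp_all add: gp_nonneg)
    have "0 \<le> v p * gp b \<beta> (A p p) * v p + v p * gp b \<beta> (A p q) * v q + v q * gp b \<beta> (A p q) * v p + v q * gp b \<beta> (A q q) * v q"
      by (rule quad_nonneg[OF ga g])
    thus ?thesis using pq by (simp add: U qf_def sym algebra_simps)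
  qed
qed


lemma psd_sym: "psd_on U M \<Longrightarrow> i \<in> U \<Longrightarrow> j \<in> U \<Longrightarrow> M i j = M j i"
  unfolding psd_on_def by blast

lemma psd_qf: "psd_on U M \<Longrightarrow> 0 \<le> qf U M v"
  unfolding psd_on_qf by blast

lemma psd_intro: "(\<And>i j. i \<in> U \<Longrightarrow> j \<in> U \<Longrightarrow> M i j = M j i) \<Longrightarrow> (\<And>v. 0 \<le> qf U M v) \<Longrightarrow> psd_on U M"
  unfolding psd_on_qf by blast

lemma pos:
  assumes "finite U" "psd_on U A" "0 \<le> \<beta>" "real (card U) \<le> \<beta> + 2"
  shows "psd_on U (\<lambda>i j. gp b \<beta> (A i j))"
  using assms
proof (induction U arbitrary: A \<beta> b rule: finite_induct)
  case empty thus ?case by (simp add: psd_empty)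
next
  case (insert k F)
  let ?U = "insert k F"
  have fU: "finite ?U" using insert.hyps by simp
  have cU: "card ?U = card F + 1" using insert.hyps by simp
  show ?case
  proof (cases "\<beta> < 1")
    case True
    hence "card ?U \<le> 2" using insert.prems(3) by linarith
    thus ?thesis by (rule pos_small[OF fU _ insert.prems(1,2)])
  next
    case False
    hence b1: "\<beta> \<ge> 1" by simp
    obtain z where z1: "psd_on ?U (\<lambda>i j. A i j - z i * z j)"
        and z2: "\<forall>j\<in>?U. A k j - z k * z j = 0"
      using pivot[OF fU _ insert.prems(1)] by blast
    define B where "B = (\<lambda>i j. A i j - z i * z j)"
    define Z where "Z = (\<lambda>i j. z i * z j)"
    have AZB: "\<And>i j. A i j = Z i j + B i j" by (simp add: B_def Z_def)
    have Bpsd: "psd_on ?U B" using z1 B_def by simp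
    have Zpsd: "psd_on ?U Z" unfolding Z_def by (rule psd_rank1)
    have BF: "psd_on F B" by (rule psd_subset[OF fU _ Bpsd]) blast
    show ?thesis
    proof (rule psd_intro)
      fix i j assume "i \<in> ?U" "j \<in> ?U"
      thus "gp b \<beta> (A i j) = gp b \<beta> (A j i)" using psd_sym[OF insert.prems(1)] by metis
    next
      fix v
      define D where "D = (\<lambda>i j. gp b \<beta> (A i j) - gp b \<beta> (Z i j))"
      have "qf ?U (\<lambda>i j. gp b \<beta> (A i j)) v = qf ?U (\<lambda>i j. gp b \<beta> (Z i j) + D i j) v"
        by (rule qf_cong) (simp add: D_def)
      also have "\<dots> = qf ?U (\<lambda>i j. gp b \<beta> (Z i j)) v + qf ?U D v" by (rule qf_add)
      also have "qf ?U (\<lambda>i j. gp b \<beta> (Z i j)) v = qf ?U (\<lambda>i j. gp b \<beta> (z i) * gp b \<beta> (z j)) v"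
        by (rule qf_cong) (simp add: Z_def gp_mult)
      also have "qf ?U D v = qf (?U - {k}) D v"
      proof (rule qf_remove[OF fU])
        show "k \<in> ?U" by simp
        fix j assume j: "j \<in> ?U"
        have "A k j - z k * z j = 0" using z2 j by blast
        hence "A k j = Z k j" unfolding Z_def by simp
        thus "D k j = 0" by (simp add: D_def)
        have "A j k = A k j" by (rule psd_sym[OF insert.prems(1) j]) simp
        moreover have "Z j k = Z k j" by (simp add: Z_def)
        ultimately show "D j k = 0" using \<open>A k j = Z k j\<close> by (simp add: D_def)
      qed
      also have "?U - {k} = F" using insert.hyps by auto
      finally have eq: "qf ?U (\<lambda>i j. gp b \<beta> (A i j)) v =
          qf ?U (\<lambda>i j. gp b \<beta> (z i) * gp b \<beta> (z j)) v + qf F D v" .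
      have n1: "0 \<le> qf ?U (\<lambda>i j. gp b \<beta> (z i) * gp b \<beta> (z j)) v" by (rule psd_qf[OF psd_rank1])
      have n2: "0 \<le> qf F D v"
      proof (rule qf_integral[where F = "\<lambda>i j l. (A i j - Z i j) * (\<beta> * gp (\<not> b) (\<beta> - 1) (Z i j + l * (A i j - Z i j)))"])
        show "finite F" by (rule insert.hyps)
        fix i j assume "i \<in> F" "j \<in> F"
        show "((\<lambda>l. (A i j - Z i j) * (\<beta> * gp (\<not> b) (\<beta> - 1) (Z i j + l * (A i j - Z i j)))) has_integral D i j) {0..1}"
          unfolding D_def by (rule gp_integral[OF b1])
      next
        fix l :: real assume l: "l \<in> {0..1}"
        define H where "H = (\<lambda>i j. gp (\<not> b) (\<beta> - 1) (Z i j + l * B i j))"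
        have "psd_on ?U (\<lambda>i j. Z i j + l * B i j)"
          by (rule psd_add[OF Zpsd psd_scale[OF Bpsd]]) (use l in simp)
        hence "psd_on F (\<lambda>i j. Z i j + l * B i j)" by (rule psd_subset[OF fU, rotated]) blast
        hence Hpsd: "psd_on F H" unfolding H_def
          by (rule insert.IH) (use b1 insert.prems(3) cU in simp_all)
        have "psd_on F (\<lambda>i j. B i j * H i j)" by (rule schur[OF insert.hyps(1) BF Hpsd])
        hence "0 \<le> \<beta> * qf F (\<lambda>i j. B i j * H i j) v" using b1 psd_qf by simp
        also have "\<beta> * qf F (\<lambda>i j. B i j * H i j) v =
          (\<Sum>i\<in>F. \<Sum>j\<in>F. v i * ((A i j - Z i j) * (\<beta> * gp (\<not> b) (\<beta> - 1) (Z i j + l * (A i j - Z i j)))) * v j)"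
          by (rule sum_qf_scale[symmetric]) (simp add: H_def AZB)
        finally show "0 \<le> (\<Sum>i\<in>F. \<Sum>j\<in>F. v i * ((A i j - Z i j) * (\<beta> * gp (\<not> b) (\<beta> - 1) (Z i j + l * (A i j - Z i j)))) * v j)" .
      qed
      show "0 \<le> qf ?U (\<lambda>i j. gp b \<beta> (A i j)) v" unfolding eq using n1 n2 by simp
    qed
  qed
qed



lemma mono_gp:
  assumes "finite U" "psd_on U B" "psd_on U (\<lambda>i j. A i j - B i j)" "0 \<le> \<gamma>" "real (card U) \<le> \<gamma> + 1"
  shows "psd_on U (\<lambda>i j. gp b \<gamma> (A i j) - gp b \<gamma> (B i j))"
proof (rule psd_intro)
  fix i j assume ij: "i \<in> U" "j \<in> U"
  have "B i j = B j i" by (rule psd_sym[OF assms(2) ij])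
  moreover have "A i j - B i j = A j i - B j i" by (rule psd_sym[OF assms(3) ij])
  ultimately have "A i j = A j i" by simp
  thus "gp b \<gamma> (A i j) - gp b \<gamma> (B i j) = gp b \<gamma> (A j i) - gp b \<gamma> (B j i)"
    using \<open>B i j = B j i\<close> by simp
next
  fix v
  show "0 \<le> qf U (\<lambda>i j. gp b \<gamma> (A i j) - gp b \<gamma> (B i j)) v"
  proof (cases "\<gamma> < 1")
    case True
    hence "card U \<le> 1" using assms(5) by linarith
    hence "card U = 0 \<or> card U = 1" by linarith
    thus ?thesis
    proof (elim disjE)
      assume "card U = 0" hence "U = {}" using assms(1) by simp
      thus ?thesis by (simp add: qf_def)
    next
      assume "card U = 1"
      then obtain p where U: "U = {p}" by (meson card_1_singletonE)
      have b0: "B p p \<ge> 0" by (rule psd_diag[OF assms(1,2)]) (simp add: U)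
      have "A p p - B p p \<ge> 0" using psd_diag[OF assms(1,3), of p] U by simp
      hence "B p p powr \<gamma> \<le> A p p powr \<gamma>" by (intro powr_mono2) (use assms(4) b0 in auto)
      hence "0 \<le> gp b \<gamma> (A p p) - gp b \<gamma> (B p p)" using b0 \<open>A p p - B p p \<ge> 0\<close> by (simp add: gp_nonneg)
      hence "0 \<le> (gp b \<gamma> (A p p) - gp b \<gamma> (B p p)) * (v p * v p)" by (rule mult_nonneg_nonneg) simp
      thus ?thesis by (simp add: U qf_def algebra_simps)
    qed
  next
    case False
    hence g1: "\<gamma> \<ge> 1" by simp
    show ?thesis
    proof (rule qf_integral[where F = "\<lambda>i j l. (A i j - B i j) * (\<gamma> * gp (\<not> b) (\<gamma> - 1) (B i j + l * (A i j - B i j)))"])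
      show "finite U" by (rule assms(1))
      fix i j assume "i \<in> U" "j \<in> U"
      show "((\<lambda>l. (A i j - B i j) * (\<gamma> * gp (\<not> b) (\<gamma> - 1) (B i j + l * (A i j - B i j)))) has_integral
              (gp b \<gamma> (A i j) - gp b \<gamma> (B i j))) {0..1}"
        by (rule gp_integral[OF g1])
    next
      fix l :: real assume l: "l \<in> {0..1}"
      define H where "H = (\<lambda>i j. gp (\<not> b) (\<gamma> - 1) (B i j + l * (A i j - B i j)))"
      have "psd_on U (\<lambda>i j. B i j + l * (A i j - B i j))"
        by (rule psd_add[OF assms(2) psd_scale[OF assms(3)]]) (use l in simp)
      hence Hpsd: "psd_on U H" unfolding H_def
        by (rule pos[OF assms(1)]) (use g1 assms(5) in simp_all)
      have "psd_on U (\<lambda>i j. (A i j - B i j) * H i j)" by (rule schur[OF assms(1,3) Hpsd])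
      hence "0 \<le> \<gamma> * qf U (\<lambda>i j. (A i j - B i j) * H i j) v" using g1 psd_qf by simp
      also have "\<gamma> * qf U (\<lambda>i j. (A i j - B i j) * H i j) v =
        (\<Sum>i\<in>U. \<Sum>j\<in>U. v i * ((A i j - B i j) * (\<gamma> * gp (\<not> b) (\<gamma> - 1) (B i j + l * (A i j - B i j)))) * v j)"
        by (rule sum_qf_scale[symmetric]) (simp add: H_def)
      finally show "0 \<le> (\<Sum>i\<in>U. \<Sum>j\<in>U. v i * ((A i j - B i j) * (\<gamma> * gp (\<not> b) (\<gamma> - 1) (B i j + l * (A i j - B i j)))) * v j)" .
    qed
  qed
qed

lemma superadd_gp:
  assumes "finite U" "psd_on U A" "psd_on U B" "1 \<le> \<beta>" "real (card U) \<le> \<beta>"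
  shows "psd_on U (\<lambda>i j. gp b \<beta> (A i j + B i j) - gp b \<beta> (A i j) - gp b \<beta> (B i j))"
proof (rule psd_intro)
  fix i j assume ij: "i \<in> U" "j \<in> U"
  have "A i j = A j i" "B i j = B j i" using psd_sym[OF assms(2) ij] psd_sym[OF assms(3) ij] by auto
  thus "gp b \<beta> (A i j + B i j) - gp b \<beta> (A i j) - gp b \<beta> (B i j) =
        gp b \<beta> (A j i + B j i) - gp b \<beta> (A j i) - gp b \<beta> (B j i)" by simp
next
  fix v
  let ?g = "gp (\<not> b) (\<beta> - 1)"
  show "0 \<le> qf U (\<lambda>i j. gp b \<beta> (A i j + B i j) - gp b \<beta> (A i j) - gp b \<beta> (B i j)) v"
  proof (rule qf_integral[where F = "\<lambda>i j l. (A i j + B i j - A i j) * (\<beta> * ?g (A i j + l * (A i j + B i j - A i j)))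
        - (B i j - 0) * (\<beta> * ?g (0 + l * (B i j - 0)))"])
    show "finite U" by (rule assms(1))
    fix i j assume "i \<in> U" "j \<in> U"
    have "((\<lambda>l. (A i j + B i j - A i j) * (\<beta> * ?g (A i j + l * (A i j + B i j - A i j)))
        - (B i j - 0) * (\<beta> * ?g (0 + l * (B i j - 0)))) has_integral
        ((gp b \<beta> (A i j + B i j) - gp b \<beta> (A i j)) - (gp b \<beta> (B i j) - gp b \<beta> 0))) {0..1}"
      by (intro has_integral_diff gp_integral assms(4))
    thus "((\<lambda>l. (A i j + B i j - A i j) * (\<beta> * ?g (A i j + l * (A i j + B i j - A i j)))
        - (B i j - 0) * (\<beta> * ?g (0 + l * (B i j - 0)))) has_integral
        (gp b \<beta> (A i j + B i j) - gp b \<beta> (A i j) - gp b \<beta> (B i j))) {0..1}" by simp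
  next
    fix l :: real assume l: "l \<in> {0..1}"
    define H where "H = (\<lambda>i j. ?g (A i j + l * B i j) - ?g (l * B i j))"
    have lB: "psd_on U (\<lambda>i j. l * B i j)" by (rule psd_scale[OF assms(3)]) (use l in simp)
    have dif: "psd_on U (\<lambda>i j. (A i j + l * B i j) - l * B i j)" using assms(2) by simp
    have Hpsd: "psd_on U H" unfolding H_def
      by (rule mono_gp[OF assms(1) lB dif]) (use assms(4,5) in simp_all)
    have "psd_on U (\<lambda>i j. B i j * H i j)" by (rule schur[OF assms(1,3) Hpsd])
    hence "0 \<le> \<beta> * qf U (\<lambda>i j. B i j * H i j) v" using assms(4) psd_qf by simp
    also have "\<beta> * qf U (\<lambda>i j. B i j * H i j) v =
      (\<Sum>i\<in>U. \<Sum>j\<in>U. v i * ((A i j + B i j - A i j) * (\<beta> * ?g (A i j + l * (A i j + B i j - A i j)))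
        - (B i j - 0) * (\<beta> * ?g (0 + l * (B i j - 0)))) * v j)"
      by (rule sum_qf_scale[symmetric]) (simp add: H_def algebra_simps)
    finally show "0 \<le> (\<Sum>i\<in>U. \<Sum>j\<in>U. v i * ((A i j + B i j - A i j) * (\<beta> * ?g (A i j + l * (A i j + B i j - A i j)))
        - (B i j - 0) * (\<beta> * ?g (0 + l * (B i j - 0)))) * v j)" .
  qed
qed



lemma clique_sum:
  assumes fin: "finite (X \<union> Y)" and comp: "complete_on E (X \<inter> Y)"
    and noedge: "\<forall>a\<in>X - Y. \<forall>c\<in>Y - X. \<not> E a c"
    and card: "real (card (X \<inter> Y)) \<le> \<alpha>" and apos: "0 < \<alpha>"
    and pX: "preserves_positivity (gp b \<alpha>) E X" and pY: "preserves_positivity (gp b \<alpha>) E Y"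
  shows "preserves_positivity (gp b \<alpha>) E (X \<union> Y)"
  unfolding preserves_positivity_def
proof
  fix M assume "M \<in> PG E (X \<union> Y)"
  hence Mpsd: "psd_on (X \<union> Y) M" and Mz: "\<And>i j. i \<in> X \<union> Y \<Longrightarrow> j \<in> X \<union> Y \<Longrightarrow> i \<noteq> j \<Longrightarrow> \<not> E i j \<Longrightarrow> M i j = 0"
    unfolding PG_def by auto
  let ?U = "X \<union> Y"
  let ?f = "gp b \<alpha>"
  have MAB: "\<forall>i\<in>X - Y. \<forall>j\<in>Y - X. M i j = 0"
  proof (intro ballI)
    fix i j assume "i \<in> X - Y" "j \<in> Y - X"
    thus "M i j = 0" using Mz noedge by (metis DiffD1 DiffD2 UnI1 UnI2)
  qed
  obtain M1 where h1: "psd_on ?U M1" and h2: "psd_on ?U (\<lambda>i j. M i j - M1 i j)"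
      and h3: "\<forall>i\<in>X - Y. \<forall>j\<in>?U. M i j - M1 i j = 0" and h4: "\<forall>i\<in>Y - X. \<forall>j\<in>?U. M1 i j = 0"
    using split_elim[OF fin Mpsd _ _ _ MAB] by blast
  define M2 where "M2 = (\<lambda>i j. M i j - M1 i j)"
  have M2psd: "psd_on ?U M2" using h2 M2_def by simp
  have F1: "M1 i j = M i j" if "i \<in> ?U" "j \<in> ?U" "i \<in> X - Y \<or> j \<in> X - Y" for i j
  proof (cases "i \<in> X - Y")
    case True thus ?thesis using h3 that by auto
  next
    case False
    hence j: "j \<in> X - Y" using that by blast
    have "M1 j i = M j i" using h3 j that(1) by auto
    moreover have "M1 i j = M1 j i" by (rule psd_sym[OF h1 that(1,2)])
    moreover have "M i j = M j i" by (rule psd_sym[OF Mpsd that(1,2)])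
    ultimately show ?thesis by simp
  qed
  have F2: "M2 i j = M i j" if "i \<in> ?U" "j \<in> ?U" "i \<in> Y - X \<or> j \<in> Y - X" for i j
  proof (cases "i \<in> Y - X")
    case True thus ?thesis using h4 that by (auto simp: M2_def)
  next
    case False
    hence j: "j \<in> Y - X" using that by blast
    have "M1 j i = 0" using h4 j that(1) by auto
    moreover have "M1 i j = M1 j i" by (rule psd_sym[OF h1 that(1,2)])
    ultimately show ?thesis by (simp add: M2_def)
  qed
  have F3: "M i j = 0" if "i \<in> ?U" "j \<in> ?U" "(i \<in> X - Y \<and> j \<in> Y - X) \<or> (i \<in> Y - X \<and> j \<in> X - Y)" for i j
  proof (cases "i \<in> X - Y")
    case True thus ?thesis using MAB that by auto
  next
    case False
    hence "M j i = 0" using MAB that by auto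
    moreover have "M i j = M j i" by (rule psd_sym[OF Mpsd that(1,2)])
    ultimately show ?thesis by simp
  qed
  have M1X: "M1 \<in> PG E X"
    unfolding PG_def
  proof (intro CollectI conjI ballI impI)
    show "psd_on X M1" by (rule psd_subset[OF fin _ h1]) blast
    fix i j assume ij: "i \<in> X" "j \<in> X" and ne: "i \<noteq> j \<and> \<not> E i j"
    show "M1 i j = 0"
    proof (cases "i \<in> X - Y \<or> j \<in> X - Y")
      case True
      hence "M1 i j = M i j" using F1 ij by blast
      thus ?thesis using Mz ij ne by auto
    next
      case False
      hence "i \<in> X \<inter> Y" "j \<in> X \<inter> Y" using ij by auto
      hence "E i j" using comp ne unfolding complete_on_def by blast
      thus ?thesis using ne by simp
    qed
  qed
  have M2Y: "M2 \<in> PG E Y"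
    unfolding PG_def
  proof (intro CollectI conjI ballI impI)
    show "psd_on Y M2" by (rule psd_subset[OF fin _ M2psd]) blast
    fix i j assume ij: "i \<in> Y" "j \<in> Y" and ne: "i \<noteq> j \<and> \<not> E i j"
    show "M2 i j = 0"
    proof (cases "i \<in> Y - X \<or> j \<in> Y - X")
      case True
      hence "M2 i j = M i j" using F2 ij by blast
      thus ?thesis using Mz ij ne by auto
    next
      case False
      hence "i \<in> X \<inter> Y" "j \<in> X \<inter> Y" using ij by auto
      hence "E i j" using comp ne unfolding complete_on_def by blast
      thus ?thesis using ne by simp
    qed
  qed
  have N1: "psd_on X (\<lambda>i j. ?f (M1 i j))"
    using pX M1X unfolding preserves_positivity_def PG_def entrywise_def by blast
  have N2: "psd_on Y (\<lambda>i j. ?f (M2 i j))"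
    using pY M2Y unfolding preserves_positivity_def PG_def entrywise_def by blast
  define D where "D = (\<lambda>i j. ?f (M1 i j + M2 i j) - ?f (M1 i j) - ?f (M2 i j))"
  have finC: "finite (X \<inter> Y)" using fin by (rule finite_subset[rotated]) blast
  have Dpsd: "psd_on (X \<inter> Y) D"
  proof (cases "X \<inter> Y = {}")
    case True thus ?thesis by (simp add: psd_empty)
  next
    case False
    hence "card (X \<inter> Y) \<ge> 1" using finC by (simp add: Suc_leI card_gt_0_iff)
    hence a1: "1 \<le> \<alpha>" using card by linarith
    show ?thesis unfolding D_def
      by (rule superadd_gp[OF finC psd_subset[OF fin _ h1] psd_subset[OF fin _ M2psd] a1 card]) blast+
  qed
  have key: "?f (M i j) = (if i \<in> X \<and> j \<in> X then ?f (M1 i j) else 0)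
      + (if i \<in> Y \<and> j \<in> Y then ?f (M2 i j) else 0) + (if i \<in> X \<inter> Y \<and> j \<in> X \<inter> Y then D i j else 0)"
    if ij: "i \<in> ?U" "j \<in> ?U" for i j
  proof -
    consider "i \<in> X - Y" | "i \<in> Y - X" | "i \<in> X \<inter> Y" using ij by blast
    note ci = this
    consider "j \<in> X - Y" | "j \<in> Y - X" | "j \<in> X \<inter> Y" using ij by blast
    note cj = this
    show ?thesis
    proof (cases rule: ci; cases rule: cj)
      assume "i \<in> X - Y" "j \<in> X - Y" thus ?thesis using F1[OF ij] by simp
    next
      assume "i \<in> X - Y" "j \<in> Y - X" thus ?thesis using F3[OF ij] by simp
    next
      assume "i \<in> X - Y" "j \<in> X \<inter> Y" thus ?thesis using F1[OF ij] by simp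
    next
      assume "i \<in> Y - X" "j \<in> X - Y" thus ?thesis using F3[OF ij] by simp
    next
      assume "i \<in> Y - X" "j \<in> Y - X" thus ?thesis using F2[OF ij] by simp
    next
      assume "i \<in> Y - X" "j \<in> X \<inter> Y" thus ?thesis using F2[OF ij] by simp
    next
      assume "i \<in> X \<inter> Y" "j \<in> X - Y" thus ?thesis using F1[OF ij] by simp
    next
      assume "i \<in> X \<inter> Y" "j \<in> Y - X" thus ?thesis using F2[OF ij] by simp
    next
      assume "i \<in> X \<inter> Y" "j \<in> X \<inter> Y" thus ?thesis by (simp add: D_def M2_def)
    qed
  qed
  have psdU: "psd_on ?U (\<lambda>i j. ?f (M i j))"
  proof (rule psd_intro)
    fix i j assume "i \<in> ?U" "j \<in> ?U"
    thus "?f (M i j) = ?f (M j i)" using psd_sym[OF Mpsd] by metis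
  next
    fix v
    have "qf ?U (\<lambda>i j. ?f (M i j)) v = qf ?U (\<lambda>i j. (if i \<in> X \<and> j \<in> X then ?f (M1 i j) else 0)
      + (if i \<in> Y \<and> j \<in> Y then ?f (M2 i j) else 0) + (if i \<in> X \<inter> Y \<and> j \<in> X \<inter> Y then D i j else 0)) v"
      by (rule qf_cong) (rule key)
    also have "\<dots> = qf ?U (\<lambda>i j. if i \<in> X \<and> j \<in> X then ?f (M1 i j) else 0) v
        + qf ?U (\<lambda>i j. if i \<in> Y \<and> j \<in> Y then ?f (M2 i j) else 0) v
        + qf ?U (\<lambda>i j. if i \<in> X \<inter> Y \<and> j \<in> X \<inter> Y then D i j else 0) v"
      by (simp only: qf_add)
    also have "\<dots> = qf X (\<lambda>i j. ?f (M1 i j)) v + qf Y (\<lambda>i j. ?f (M2 i j)) v + qf (X \<inter> Y) D v"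
      by (simp only: qf_ext[OF fin] Un_upper1 Un_upper2 Int_lower1 le_supI1)
    finally have eq: "qf ?U (\<lambda>i j. ?f (M i j)) v = qf X (\<lambda>i j. ?f (M1 i j)) v + qf Y (\<lambda>i j. ?f (M2 i j)) v + qf (X \<inter> Y) D v" .
    show "0 \<le> qf ?U (\<lambda>i j. ?f (M i j)) v" unfolding eq
      using psd_qf[OF N1, of v] psd_qf[OF N2, of v] psd_qf[OF Dpsd, of v] by simp
  qed
  show "entrywise ?f M \<in> PG E ?U"
    unfolding PG_def entrywise_def using psdU Mz by auto
qed



lemma comps_union: "prime_comps E U P \<Longrightarrow> \<Union>P = U"
  by (induction rule: prime_comps.induct) (auto simp: decomposition_def)

lemma comps_nonempty: "prime_comps E U P \<Longrightarrow> P \<noteq> {}"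
  by (induction rule: prime_comps.induct) auto

lemma comps_edge:
  assumes "prime_comps E U P"
  shows "(\<forall>x\<in>U. \<forall>y\<in>U. E x y \<longrightarrow> E y x) \<Longrightarrow> x \<in> U \<Longrightarrow> y \<in> U \<Longrightarrow> x \<noteq> y \<Longrightarrow> E x y \<Longrightarrow> \<exists>Q\<in>P. x \<in> Q \<and> y \<in> Q"
  using assms
proof (induction arbitrary: x y rule: prime_comps.induct)
  case (prime U) thus ?case by auto
next
  case (decomp U A C B P1 P2)
  have d: "A \<union> C \<union> B = U" "A \<inter> C = {}" "A \<inter> B = {}" "C \<inter> B = {}"
    and path: "\<And>p. is_path E U p \<Longrightarrow> hd p \<in> A \<Longrightarrow> last p \<in> B \<Longrightarrow> set p \<inter> C \<noteq> {}"
    using decomp.hyps(1) unfolding decomposition_def by auto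
  have noAB: False if "a \<in> A" "c \<in> B" "E a c" for a c
  proof -
    have "a \<noteq> c" using that d by auto
    hence "is_path E U [a, c]" using that d unfolding is_path_def by (auto simp: less_Suc_eq)
    hence "set [a, c] \<inter> C \<noteq> {}" by (rule path) (use that in simp_all)
    thus False using that d by auto
  qed
  show ?case
  proof (cases "x \<in> A \<union> C \<and> y \<in> A \<union> C")
    case True
    have "\<exists>Q\<in>P1. x \<in> Q \<and> y \<in> Q"
      by (rule decomp.IH(1)) (use decomp.prems True d in auto)
    thus ?thesis by auto
  next
    case F1: False
    show ?thesis
    proof (cases "x \<in> B \<union> C \<and> y \<in> B \<union> C")
      case True
      have "\<exists>Q\<in>P2. x \<in> Q \<and> y \<in> Q"
        by (rule decomp.IH(2)) (use decomp.prems True d in auto)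
      thus ?thesis by auto
    next
      case False
      have "(x \<in> A \<and> y \<in> B) \<or> (x \<in> B \<and> y \<in> A)" using F1 False decomp.prems d by blast
      thus ?thesis
      proof
        assume "x \<in> A \<and> y \<in> B" thus ?thesis using noAB decomp.prems by blast
      next
        assume xy: "x \<in> B \<and> y \<in> A"
        hence "E y x" using decomp.prems by blast
        thus ?thesis using noAB xy by blast
      qed
    qed
  qed
qed


theorem corollary4p2:
  fixes V :: "nat set" and E :: "nat \<Rightarrow> nat \<Rightarrow> bool" and Bs :: "nat set list"
    and \<alpha> :: real and f :: "real \<Rightarrow> real"
  assumes "simple_graph V E"
    and "prime_comps E V (set Bs)" and "distinct Bs"
    and "perfect_ordering E Bs"
    and "\<alpha> > 0"
    and "f = psi \<alpha> \<or> f = phi \<alpha>"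
    and "\<forall>i<length Bs. preserves_positivity f E (Bs ! i)"
    and "\<forall>i<length Bs. \<alpha> \<ge> real (card (sep Bs i))"
  shows "preserves_positivity f E V"
proof -
  obtain b where fb: "f = gp b \<alpha>" using assms(6) psi_gp phi_gp by blast
  have finV: "finite V" and symE: "\<forall>x\<in>V. \<forall>y\<in>V. E x y \<longrightarrow> E y x"
    using assms(1) unfolding simple_graph_def by auto
  have UV: "\<Union>(set Bs) = V" by (rule comps_union[OF assms(2)])
  have ne: "Bs \<noteq> []" using comps_nonempty[OF assms(2)] by auto
  have sub: "Bs ! j \<subseteq> V" if "j < length Bs" for j using UV nth_mem[OF that] by blast
  define Up where "Up i = (\<Union>j\<in>{..i}. Bs ! j)" for i
  have UpV: "Up i \<subseteq> V" if "i < length Bs" for i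
    unfolding Up_def
  proof (rule UN_least)
    fix j assume "j \<in> {..i}"
    hence "j < length Bs" using that by simp
    thus "Bs ! j \<subseteq> V" by (rule sub)
  qed
  have po1: "\<And>i. 0 < i \<Longrightarrow> i < length Bs \<Longrightarrow> \<exists>j<i. sep Bs i \<subseteq> Bs ! j"
    and po2: "\<And>i. i < length Bs \<Longrightarrow> complete_on E (sep Bs i)"
    using assms(4) unfolding perfect_ordering_def by auto
  have step: "i < length Bs \<longrightarrow> preserves_positivity f E (Up i)" for i
  proof (induction i)
    case 0 thus ?case using assms(7) by (simp add: Up_def)
  next
    case (Suc i)
    show ?case
    proof
      assume si: "Suc i < length Bs"
      hence IH: "preserves_positivity f E (Up i)" using Suc by simp
      have eqU: "Up (Suc i) = Up i \<union> Bs ! Suc i" by (simp add: Up_def atMost_Suc Un_commute)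
      have sepeq: "Up i \<inter> Bs ! Suc i = sep Bs (Suc i)"
        by (simp add: sep_def Up_def lessThan_Suc_atMost)
      have noedge: "\<forall>a\<in>Up i - Bs ! Suc i. \<forall>c\<in>Bs ! Suc i - Up i. \<not> E a c"
      proof (intro ballI notI)
        fix a c assume a: "a \<in> Up i - Bs ! Suc i" and c: "c \<in> Bs ! Suc i - Up i" and Eac: "E a c"
        have aV: "a \<in> V" using a UpV[of i] si by auto
        have cV: "c \<in> V" using c sub[OF si] by auto
        have "a \<noteq> c" using a c by auto
        obtain Q where "Q \<in> set Bs" "a \<in> Q" "c \<in> Q"
          using comps_edge[OF assms(2) symE aV cV \<open>a \<noteq> c\<close> Eac] by blast
        then obtain m where m: "m < length Bs" "a \<in> Bs ! m" "c \<in> Bs ! m" by (metis in_set_conv_nth)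
        define P where "P m = (m < length Bs \<and> a \<in> Bs ! m \<and> c \<in> Bs ! m)" for m
        define m0 where "m0 = (LEAST m. P m)"
        have Pm0: "P m0" unfolding m0_def by (rule LeastI[of P m]) (use m P_def in simp)
        have minl: "\<And>m. P m \<Longrightarrow> m0 \<le> m" unfolding m0_def by (rule Least_le)
        have gt: "Suc i < m0"
        proof (rule ccontr)
          assume "\<not> Suc i < m0"
          hence "m0 \<le> i \<or> m0 = Suc i" by linarith
          thus False
          proof
            assume "m0 \<le> i"
            hence "c \<in> Up i" using Pm0 unfolding P_def Up_def by auto
            thus False using c by simp
          next
            assume "m0 = Suc i"
            thus False using Pm0 a unfolding P_def by simp
          qed
        qed
        have "a \<in> (\<Union>j<m0. Bs ! j)" using a gt unfolding Up_def by auto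
        moreover have "c \<in> (\<Union>j<m0. Bs ! j)" using c gt by auto
        ultimately have "a \<in> sep Bs m0" "c \<in> sep Bs m0" using Pm0 unfolding sep_def P_def by auto
        moreover obtain j where "j < m0" "sep Bs m0 \<subseteq> Bs ! j" using po1[of m0] gt Pm0 unfolding P_def by auto
        ultimately have "P j" using Pm0 unfolding P_def by auto
        hence "m0 \<le> j" by (rule minl)
        thus False using \<open>j < m0\<close> by simp
      qed
      have fin: "finite (Up i \<union> Bs ! Suc i)"
        using finV UpV[of i] sub[OF si] si by (auto intro: finite_subset)
      have "preserves_positivity (gp b \<alpha>) E (Up i \<union> Bs ! Suc i)"
      proof (rule clique_sum[OF fin])
        show "complete_on E (Up i \<inter> Bs ! Suc i)" unfolding sepeq by (rule po2[OF si])
        show "\<forall>a\<in>Up i - Bs ! Suc i. \<forall>c\<in>Bs ! Suc i - Up i. \<not> E a c" by (rule noedge)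
        show "real (card (Up i \<inter> Bs ! Suc i)) \<le> \<alpha>" unfolding sepeq using assms(8) si by blast
        show "0 < \<alpha>" by (rule assms(5))
        show "preserves_positivity (gp b \<alpha>) E (Up i)" using IH fb by simp
        show "preserves_positivity (gp b \<alpha>) E (Bs ! Suc i)" using assms(7) si fb by simp
      qed
      thus "preserves_positivity f E (Up (Suc i))" using eqU fb by simp
    qed
  qed
  have last: "length Bs - 1 < length Bs" using ne by simp
  have "Up (length Bs - 1) = \<Union>(set Bs)"
  proof -
    have lp: "length Bs > 0" using ne by simp
    have "{..length Bs - 1} = {..<length Bs}" using lp by (auto simp: less_eq_Suc_le)
    hence "Up (length Bs - 1) = (\<Union>j\<in>{..<length Bs}. Bs ! j)" unfolding Up_def by simp
    also have "\<dots> = \<Union>(set Bs)" by (auto simp: in_set_conv_nth) (meson nth_mem)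
    finally show ?thesis .
  qed
  thus ?thesis using step[of "length Bs - 1"] last UV by simp
qed


end
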